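(* Let $Y_n(\omega)=\{f_{l,n}(\omega)\}_{l=1}^{R_n}\subset\mathbb R^d$ ($n\in\mathbb N$) be as in the general framework, fix $\omega\in\Omega$ and $h:\mathbb N\to[0,\infty)$. Suppose there is $\gamma>1$ with $R_n\asymp\gamma^n$, and there exist $c>0$, $s>0$ with $\sum_{n:\,\omega\in B(c,s,n)}h(n)=\infty$. Then the set $\{x\in\mathbb R^d: x\in\bigcup_{l=1}^{R_n}B(f_{l,n}(\omega),(h(n)/R_n)^{1/d})$ for infinitely many $n\}$ has positive Lebesgue measure.
   Context: General framework: $\Omega$ a metric space, $\tilde X\subset\mathbb R^d$ compact, for each $n$ finitely many continuous $f_{l,n}:\Omega\to\tilde X$, $l=1,\ldots,R_n$. $T(Y,r)$ = maximal cardinality of an $r$-separated subset (distinct points at distance $>r$) of finite $Y$. $B(c,s,n)=\{\omega\in\Omega:T(Y_n(\omega),sR_n^{-1/d})/R_n>c\}$. *)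

theory Defs
  imports "HOL-Analysis.Analysis" "HOL-Library.Landau_Symbols"
begin

definition separated :: "real \<Rightarrow> 'b::metric_space set \<Rightarrow> bool" where
  "separated r S \<longleftrightarrow> (\<forall>x\<in>S. \<forall>y\<in>S. x \<noteq> y \<longrightarrow> dist x y > r)"

definition Tsep :: "'b::metric_space set \<Rightarrow> real \<Rightarrow> nat" where
  "Tsep Y r = Max {card S | S. S \<subseteq> Y \<and> separated r S}"

definition Yset :: "(nat \<Rightarrow> nat \<Rightarrow> 'a \<Rightarrow> 'b) \<Rightarrow> (nat \<Rightarrow> nat) \<Rightarrow> nat \<Rightarrow> 'a \<Rightarrow> 'b set" where
  "Yset f R n \<omega> = (\<lambda>l. f l n \<omega>) ` {1..R n}"

definition Bset :: "(nat \<Rightarrow> nat \<Rightarrow> 'a \<Rightarrow> 'b::euclidean_space) \<Rightarrow> (nat \<Rightarrow> nat) \<Rightarrow> real \<Rightarrow> real \<Rightarrow> nat \<Rightarrow> 'a set" where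
  "Bset f R c s n = {\<omega>. real (Tsep (Yset f R n \<omega>) (s * real (R n) powr (-1 / real DIM('b)))) / real (R n) > c}"

end

theory Submission
  imports Defs
begin

lemma vol_ball:
  fixes c :: "'a::euclidean_space"
  assumes "r \<ge> 0"
  shows "measure lebesgue (ball c r) = unit_ball_vol (DIM('a)) * r ^ DIM('a)"
proof -
  have "measure lebesgue (ball c r) = measure lborel (ball c r)"
    by (rule measure_completion) simp
  also have "\<dots> = unit_ball_vol (DIM('a)) * r ^ DIM('a)"
    using content_ball[of r c] assms by simp
  finally show ?thesis .
qed

lemma count_sep:
  fixes Z :: "'a::euclidean_space set"
  assumes fin: "finite Z" and rho: "\<rho> > 0" and sep: "separated \<rho> Z"
    and sub: "Z \<subseteq> ball y t" and t: "t \<ge> 0"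
  shows "real (card Z) * (\<rho>/2) ^ DIM('a) \<le> (t + \<rho>/2) ^ DIM('a)"
proof -
  let ?d = "DIM('a)"
  let ?v = "unit_ball_vol (real ?d)"
  have v: "?v > 0" by simp
  have pw: "(\<Sum>z\<in>Z. indicator (ball z (\<rho>/2)) x) \<le> (indicator (ball y (t + \<rho>/2)) x :: real)" for x
  proof -
    have eq: "(\<Sum>z\<in>Z. indicator (ball z (\<rho>/2)) x) = real (card {z\<in>Z. x \<in> ball z (\<rho>/2)})"
      using fin by (auto simp: indicator_def sum.If_cases intro!: arg_cong[where f=card])
    have fin2: "finite {z\<in>Z. x \<in> ball z (\<rho>/2)}" using fin by simp
    have c1: "card {z\<in>Z. x \<in> ball z (\<rho>/2)} \<le> Suc 0"
      unfolding card_le_Suc0_iff_eq[OF fin2]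
      proof (intro ballI, rule ccontr)
        fix a b assume a: "a \<in> {z\<in>Z. x \<in> ball z (\<rho>/2)}" and b: "b \<in> {z\<in>Z. x \<in> ball z (\<rho>/2)}" and ne: "a \<noteq> b"
        have "dist a b > \<rho>" using sep a b ne unfolding separated_def by auto
        moreover have "dist a b \<le> dist a x + dist b x" by (metis dist_commute dist_triangle)
        moreover have "dist a x < \<rho>/2" "dist b x < \<rho>/2" using a b by auto
        ultimately show False by linarith
      qed
    show ?thesis
    proof (cases "{z\<in>Z. x \<in> ball z (\<rho>/2)} = {}")
      case True then show ?thesis using eq by simp
    next
      case False
      then obtain z where z: "z \<in> Z" "dist z x < \<rho>/2" by auto
      have "dist y z < t" using sub z by auto
      then have "dist y x < t + \<rho>/2" using z by (meson dist_triangle add_strict_mono le_less_trans)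
      then show ?thesis using eq c1 by (simp add: indicator_def)
    qed
  qed
  have int: "integrable lebesgue (indicator (ball z r) :: 'a \<Rightarrow> real)" for z r
    using lmeasurable_ball by (auto intro!: integrable_real_indicator simp: fmeasurable_def)
  have "(\<Sum>z\<in>Z. measure lebesgue (ball z (\<rho>/2))) = integral\<^sup>L lebesgue (\<lambda>x. \<Sum>z\<in>Z. indicator (ball z (\<rho>/2)) x)"
    using Bochner_Integration.integral_sum[where I=Z and M=lebesgue and f="\<lambda>z. indicator (ball z (\<rho>/2))", OF int] by simp
  also have "\<dots> \<le> integral\<^sup>L lebesgue (indicator (ball y (t + \<rho>/2)) :: 'a \<Rightarrow> real)"
    by (intro integral_mono pw int Bochner_Integration.integrable_sum)
  also have "\<dots> = measure lebesgue (ball y (t + \<rho>/2))" by simp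
  finally have "(\<Sum>z\<in>Z. measure lebesgue (ball z (\<rho>/2))) \<le> measure lebesgue (ball y (t + \<rho>/2))" .
  moreover have "measure lebesgue (ball z (\<rho>/2)) = ?v * (\<rho>/2) ^ ?d" for z :: 'a
    by (rule vol_ball) (use rho in simp)
  moreover have "measure lebesgue (ball y (t + \<rho>/2)) = ?v * (t + \<rho>/2) ^ ?d"
    by (rule vol_ball) (use rho t in simp)
  ultimately have "real (card Z) * (?v * (\<rho>/2) ^ ?d) \<le> ?v * (t + \<rho>/2) ^ ?d"
    by simp
  then show ?thesis using v by (simp add: mult.left_commute)
qed

lemma second_moment:
  fixes B :: "'p \<Rightarrow> 'a::euclidean_space set"
  assumes P: "finite P" and Bm: "\<And>p. p \<in> P \<Longrightarrow> B p \<in> lmeasurable" and lam: "L > 0"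
  shows "(\<Sum>p\<in>P. measure lebesgue (B p)) \<le>
     (\<Sum>p\<in>P. \<Sum>q\<in>P. measure lebesgue (B p \<inter> B q)) / (2*L) + L/2 * measure lebesgue (\<Union>p\<in>P. B p)"
proof -
  let ?U = "\<Union>p\<in>P. B p"
  have Um: "?U \<in> lmeasurable" using P Bm by (intro fmeasurable.finite_UN) auto
  have intB: "integrable lebesgue (indicator A :: 'a \<Rightarrow> real)" if "A \<in> lmeasurable" for A
    using that by (auto intro!: integrable_real_indicator simp: fmeasurable_def)
  have BBm: "B p \<inter> B q \<in> lmeasurable" if "p \<in> P" "q \<in> P" for p q
    using Bm that by (intro fmeasurable.Int) auto
  define S where "S x = (\<Sum>p\<in>P. indicator (B p) x :: real)" for x
  have S0: "S x \<ge> 0" for x unfolding S_def by (intro sum_nonneg) simp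
  have S2: "(S x)^2 = (\<Sum>p\<in>P. \<Sum>q\<in>P. indicator (B p \<inter> B q) x)" for x
    unfolding S_def power2_eq_square sum_product indicator_inter_arith ..
  have pw: "S x \<le> (\<Sum>p\<in>P. \<Sum>q\<in>P. indicator (B p \<inter> B q) x) / (2*L) + L/2 * indicator ?U x" for x
  proof (cases "S x = 0")
    case True
    have "0 \<le> (\<Sum>p\<in>P. \<Sum>q\<in>P. indicator (B p \<inter> B q) x :: real) / (2*L)"
      using lam by (intro divide_nonneg_pos sum_nonneg) auto
    moreover have "0 \<le> L/2 * (indicator ?U x :: real)" using lam by simp
    ultimately show ?thesis using True by linarith
  next
    case False
    then obtain p where "p \<in> P" "indicator (B p) x \<noteq> (0::real)" unfolding S_def
      by (meson sum.neutral)
    then have "x \<in> ?U" by (auto simp: indicator_def split: if_splits)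
    then have iU: "indicator ?U x = (1::real)" by simp
    have "S x \<le> (S x)^2/(2*L) + L/2"
    proof -
      have "0 \<le> (S x - L)^2" by simp
      then have "2*L*S x \<le> (S x)^2 + L^2" by (simp add: power2_eq_square algebra_simps)
      then show ?thesis using lam by (simp add: field_simps power2_eq_square)
    qed
    then show ?thesis using iU S2 by simp
  qed
  have "(\<Sum>p\<in>P. measure lebesgue (B p)) = integral\<^sup>L lebesgue S"
    unfolding S_def using Bochner_Integration.integral_sum[where I=P and M=lebesgue and f="\<lambda>p. indicator (B p)"] intB Bm
    by simp
  also have "\<dots> \<le> integral\<^sup>L lebesgue (\<lambda>x. (\<Sum>p\<in>P. \<Sum>q\<in>P. indicator (B p \<inter> B q) x) / (2*L) + L/2 * indicator ?U x)"
    using pw intB Bm BBm Um unfolding S_def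
    by (intro integral_mono Bochner_Integration.integrable_sum integrable_add integrable_divide integrable_mult_right) auto
  also have "\<dots> = (\<Sum>p\<in>P. \<Sum>q\<in>P. measure lebesgue (B p \<inter> B q)) / (2*L) + L/2 * measure lebesgue ?U"
  proof -
    have i1: "integral\<^sup>L lebesgue (\<lambda>x. (\<Sum>p\<in>P. \<Sum>q\<in>P. indicator (B p \<inter> B q) x :: real))
        = (\<Sum>p\<in>P. \<Sum>q\<in>P. measure lebesgue (B p \<inter> B q))"
      using intB BBm
      by (simp add: Bochner_Integration.integral_sum Bochner_Integration.integrable_sum)
    have ia: "integrable lebesgue (\<lambda>x. (\<Sum>p\<in>P. \<Sum>q\<in>P. indicator (B p \<inter> B q) x :: real) / (2*L))"
      by (intro integrable_divide Bochner_Integration.integrable_sum) (use intB BBm in auto)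
    have ib: "integrable lebesgue (\<lambda>x. L/2 * (indicator ?U x :: real))" using intB Um by auto
    show ?thesis
      unfolding Bochner_Integration.integral_add[OF ia ib] using i1 Um by simp
  qed
  finally show ?thesis .
qed

lemma pow_sum_le:
  fixes a b :: real
  assumes "a \<ge> 0" "b \<ge> 0"
  shows "(a + b) ^ k \<le> 2 ^ k * (a ^ k + b ^ k)"
proof -
  have "(a + b) ^ k \<le> (2 * max a b) ^ k"
    using assms by (intro power_mono) auto
  also have "\<dots> = 2 ^ k * max a b ^ k" by (simp add: power_mult_distrib)
  also have "max a b ^ k \<le> a ^ k + b ^ k"
    using assms by (cases "a \<le> b") (auto simp: max_def)
  then have "2 ^ k * max a b ^ k \<le> 2 ^ k * (a ^ k + b ^ k)" by simp
  finally show ?thesis .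
qed

lemma count_near:
  fixes Z :: "'a::euclidean_space set"
  assumes fin: "finite Z" and rho: "\<rho> > 0" and sep: "separated \<rho> Z"
    and r0: "r \<ge> 0" and r': "0 \<le> r'" "r' \<le> \<rho>/2"
  shows "real (card {z\<in>Z. dist y z < r + r'}) \<le> 4 ^ DIM('a) * (r ^ DIM('a) / \<rho> ^ DIM('a) + 1)"
proof -
  let ?d = "DIM('a)"
  let ?Z = "{z\<in>Z. dist y z < r + r'}"
  have sep': "separated \<rho> ?Z" using sep unfolding separated_def by auto
  have "real (card ?Z) * (\<rho>/2) ^ ?d \<le> (r + r' + \<rho>/2) ^ ?d"
    by (rule count_sep) (use fin rho sep' r0 r' in auto)
  also have "\<dots> \<le> (r + \<rho>) ^ ?d" using r' r0 rho by (intro power_mono) auto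
  also have "\<dots> \<le> 2 ^ ?d * (r ^ ?d + \<rho> ^ ?d)" using r0 rho by (intro pow_sum_le) auto
  finally have *: "real (card ?Z) * (\<rho> ^ ?d / 2 ^ ?d) \<le> 2 ^ ?d * (r ^ ?d + \<rho> ^ ?d)"
    by (simp add: power_divide)
  have pos: "\<rho> ^ ?d / 2 ^ ?d > 0" using rho by simp
  have "real (card ?Z) \<le> 2 ^ ?d * (r ^ ?d + \<rho> ^ ?d) / (\<rho> ^ ?d / 2 ^ ?d)"
    using pos_le_divide_eq[OF pos] * by blast
  also have "\<dots> = 4 ^ ?d * (r ^ ?d / \<rho> ^ ?d + 1)"
  proof -
    have f4: "(4::real) ^ ?d = 2 ^ ?d * 2 ^ ?d" by (simp add: power_mult_distrib[symmetric])
    have al: "w * (u + v) / (v / w) = (w * w) * (u / v + 1)" if "v > 0" "w > 0" for u v w :: real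
      using that by (simp add: field_simps)
    show ?thesis unfolding f4 by (rule al) (use rho in auto)
  qed
  finally show ?thesis .
qed

lemma geom_bound:
  fixes \<gamma> a b :: real and RR :: "nat \<Rightarrow> real"
  assumes J: "finite J" and n: "n \<in> J" and a: "a > 0" and g: "\<gamma> > 1"
    and up: "\<And>m. m\<in>J \<Longrightarrow> RR m \<le> b * \<gamma>^m"
    and low: "a * \<gamma>^n \<le> RR n" and R0: "\<And>m. m\<in>J \<Longrightarrow> RR m \<ge> 0"
  shows "(\<Sum>m\<in>{m\<in>J. m \<le> n}. RR m / RR n) \<le> (b/a) * (\<gamma>/(\<gamma>-1))"
proof -
  have gn: "\<gamma>^n > 0" using g by simp
  have Rn: "RR n > 0" using low a gn by (smt (verit) mult_pos_pos)
  have "0 < b * \<gamma>^n" using Rn up[OF n] by linarith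
  then have bpos: "b > 0" using g gn by (auto simp: zero_less_mult_iff)
  have "(\<Sum>m\<in>{m\<in>J. m \<le> n}. RR m / RR n) \<le> (\<Sum>m\<in>{m\<in>J. m \<le> n}. b * \<gamma>^m / (a * \<gamma>^n))"
  proof (rule sum_mono)
    fix m assume m: "m \<in> {m\<in>J. m \<le> n}"
    have "RR m / RR n \<le> b * \<gamma>^m / RR n" using up m Rn by (simp add: divide_right_mono)
    also have "\<dots> \<le> b * \<gamma>^m / (a * \<gamma>^n)"
    proof (rule divide_left_mono)
      show "0 \<le> b * \<gamma>^m" using up[of m] R0[of m] m by auto
      show "a * \<gamma>^n \<le> RR n" by (rule low)
      show "0 < RR n * (a * \<gamma>^n)" using Rn a gn by simp
    qed
    finally show "RR m / RR n \<le> b * \<gamma>^m / (a * \<gamma>^n)" .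
  qed
  also have "\<dots> \<le> (\<Sum>m\<in>{..<Suc n}. b * \<gamma>^m / (a * \<gamma>^n))"
  proof (rule sum_mono2)
    show "finite {..<Suc n}" by simp
    show "{m\<in>J. m \<le> n} \<subseteq> {..<Suc n}" by auto
    show "\<And>m. m \<in> {..<Suc n} - {m\<in>J. m \<le> n} \<Longrightarrow> 0 \<le> b * \<gamma>^m / (a * \<gamma>^n)"
    proof -
      have b0: "b \<ge> 0" using bpos by simp
      then show "\<And>m. m \<in> {..<Suc n} - {m\<in>J. m \<le> n} \<Longrightarrow> 0 \<le> b * \<gamma>^m / (a * \<gamma>^n)"
        using a gn g by simp
    qed
  qed
  also have "\<dots> = (b / (a * \<gamma>^n)) * (\<Sum>m<Suc n. \<gamma>^m)"
    unfolding sum_distrib_left by (intro sum.cong refl) simp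
  finally have *: "(\<Sum>m\<in>{m\<in>J. m \<le> n}. RR m / RR n) \<le> (b / (a * \<gamma>^n)) * (\<Sum>m<Suc n. \<gamma>^m)" .
  have geo: "(\<Sum>m<Suc n. \<gamma>^m) = (\<gamma>^Suc n - 1)/(\<gamma> - 1)"
    using g by (intro geometric_sum) simp
  have "(\<Sum>m<Suc n. \<gamma>^m) \<le> \<gamma>^Suc n / (\<gamma> - 1)" unfolding geo using g by (intro divide_right_mono) auto
  moreover have "b / (a * \<gamma> ^ n) \<ge> 0" using bpos gn a by simp
  ultimately have "(\<Sum>m\<in>{m\<in>J. m \<le> n}. RR m / RR n) \<le> b / (a * \<gamma>^n) * (\<gamma>^Suc n / (\<gamma> - 1))"
    using * by (meson mult_left_mono order_trans)
  also have "b / (a * \<gamma>^n) * (\<gamma>^Suc n / (\<gamma> - 1)) = (b/a) * (\<gamma>/(\<gamma>-1))"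
    using gn a g by (simp add: field_simps)
  finally show ?thesis .
qed

lemma core:
  fixes S :: "nat \<Rightarrow> 'a::euclidean_space set" and r \<rho> hh RR :: "nat \<Rightarrow> real"
    and a b \<gamma> s c :: real and J :: "nat set"
  assumes J: "finite J"
    and fin: "\<And>n. n\<in>J \<Longrightarrow> finite (S n)"
    and sep: "\<And>n. n\<in>J \<Longrightarrow> separated (\<rho> n) (S n)"
    and rho: "\<And>n. n\<in>J \<Longrightarrow> \<rho> n > 0"
    and r0: "\<And>n. n\<in>J \<Longrightarrow> r n \<ge> 0"
    and rle: "\<And>n. n\<in>J \<Longrightarrow> r n \<le> \<rho> n / 2"
    and rpow: "\<And>n. n\<in>J \<Longrightarrow> r n ^ DIM('a) = hh n / RR n"
    and rhopow: "\<And>n. n\<in>J \<Longrightarrow> \<rho> n ^ DIM('a) = s ^ DIM('a) / RR n"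
    and RRpos: "\<And>n. n\<in>J \<Longrightarrow> RR n > 0"
    and cardle: "\<And>n. n\<in>J \<Longrightarrow> real (card (S n)) \<le> RR n"
    and cardge: "\<And>n. n\<in>J \<Longrightarrow> c * hh n \<le> real (card (S n)) * hh n / RR n"
    and hh0: "\<And>n. n\<in>J \<Longrightarrow> hh n \<ge> 0"
    and up: "\<And>n. n\<in>J \<Longrightarrow> RR n \<le> b * \<gamma>^n"
    and low: "\<And>n. n\<in>J \<Longrightarrow> a * \<gamma>^n \<le> RR n"
    and a: "a > 0" and g: "\<gamma> > 1" and s: "s > 0" and c: "c > 0"
    and H1: "(b/a) * (\<gamma>/(\<gamma>-1)) * s ^ DIM('a) \<le> (\<Sum>n\<in>J. hh n)"
    and H2: "0 < (\<Sum>n\<in>J. hh n)"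
  shows "c^2 * unit_ball_vol (DIM('a)) * s ^ DIM('a) / 4 ^ (DIM('a)+1)
          \<le> measure lebesgue (\<Union>n\<in>J. \<Union>y\<in>S n. ball y (r n))"
proof -
  let ?d = "DIM('a)"
  define w where "w = unit_ball_vol (real ?d)"
  have w: "w > 0" unfolding w_def by simp
  define H where "H = (\<Sum>n\<in>J. hh n)"
  define G where "G = (b/a) * (\<gamma>/(\<gamma>-1))"
  define P where "P = Sigma J S"
  define B where "B p = ball (snd p) (r (fst p))" for p :: "nat \<times> 'a"
  have sd: "s ^ ?d > 0" using s by simp
  have P: "finite P" unfolding P_def using J fin by (intro finite_SigmaI) auto
  have Bm: "B p \<in> lmeasurable" for p unfolding B_def by (rule lmeasurable_ball)
  have UE: "(\<Union>p\<in>P. B p) = (\<Union>n\<in>J. \<Union>y\<in>S n. ball y (r n))"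
    unfolding P_def B_def by force
  have measB: "measure lebesgue (B p) = w * r (fst p) ^ ?d" if "p \<in> P" for p
    unfolding B_def w_def using that r0 by (intro vol_ball) (auto simp: P_def)
  define A where "A = (\<Sum>p\<in>P. measure lebesgue (B p))"
  have A_eq: "A = (\<Sum>n\<in>J. \<Sum>y\<in>S n. w * r n ^ ?d)"
  proof -
    have "A = (\<Sum>p\<in>P. w * r (fst p) ^ ?d)" unfolding A_def by (intro sum.cong refl measB)
    also have "\<dots> = (\<Sum>(n,y)\<in>Sigma J S. w * r n ^ ?d)" unfolding P_def by (simp add: split_def)
    also have "\<dots> = (\<Sum>n\<in>J. \<Sum>y\<in>S n. w * r n ^ ?d)"
      using J fin by (intro sum.Sigma[symmetric]) auto
    finally show ?thesis .
  qed
  have A_ge: "c * w * H \<le> A"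
  proof -
    have "c * w * H = (\<Sum>n\<in>J. w * (c * hh n))" unfolding H_def by (simp add: sum_distrib_left algebra_simps)
    also have "\<dots> \<le> (\<Sum>n\<in>J. \<Sum>y\<in>S n. w * r n ^ ?d)"
    proof (rule sum_mono)
      fix n assume n: "n \<in> J"
      have "w * (c * hh n) \<le> w * (real (card (S n)) * hh n / RR n)"
        using cardge[OF n] w by (intro mult_left_mono) auto
      also have "\<dots> = (\<Sum>y\<in>S n. w * r n ^ ?d)" using rpow[OF n] by simp
      finally show "w * (c * hh n) \<le> (\<Sum>y\<in>S n. w * r n ^ ?d)" .
    qed
    finally show ?thesis unfolding A_eq .
  qed
  define Q where "Q = (\<Sum>p\<in>P. \<Sum>q\<in>P. measure lebesgue (B p \<inter> B q))"
  define gg where "gg p q = (if fst p \<le> fst q \<and> dist (snd p) (snd q) < r (fst p) + r (fst q)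
      then w * r (fst q) ^ ?d else 0)" for p q :: "nat \<times> 'a"
  have gg0: "gg p q \<ge> 0" if "q \<in> P" for p q
    unfolding gg_def using w r0 that by (auto simp: P_def)
  have gle: "measure lebesgue (B p \<inter> B q) \<le> gg p q + gg q p" if pq: "p \<in> P" "q \<in> P" for p q
  proof (cases "dist (snd p) (snd q) < r (fst p) + r (fst q)")
    case False
    then have "B p \<inter> B q = {}" unfolding B_def
      by (auto simp: dist_commute) (smt (verit) dist_commute dist_triangle)
    then show ?thesis using gg0 pq by simp
  next
    case True
    show ?thesis
    proof (cases "fst p \<le> fst q")
      case le: True
      have "measure lebesgue (B p \<inter> B q) \<le> measure lebesgue (B q)"
        using Bm by (intro measure_mono_fmeasurable) auto
      also have "\<dots> = gg p q" using measB[OF pq(2)] True le unfolding gg_def by simp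
      finally show ?thesis using gg0[OF pq(1), of q] by simp
    next
      case gt: False
      have "measure lebesgue (B p \<inter> B q) \<le> measure lebesgue (B p)"
        using Bm by (intro measure_mono_fmeasurable) auto
      also have "\<dots> = gg q p" using measB[OF pq(1)] True gt unfolding gg_def
        by (simp add: dist_commute add.commute)
      finally show ?thesis using gg0[OF pq(2), of p] by simp
    qed
  qed
  have Q1: "Q \<le> 2 * (\<Sum>p\<in>P. \<Sum>q\<in>P. gg p q)"
  proof -
    have "Q \<le> (\<Sum>p\<in>P. \<Sum>q\<in>P. gg p q + gg q p)"
      unfolding Q_def by (intro sum_mono gle)
    also have "\<dots> = (\<Sum>p\<in>P. \<Sum>q\<in>P. gg p q) + (\<Sum>p\<in>P. \<Sum>q\<in>P. gg q p)"
      by (simp add: sum.distrib)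
    also have "(\<Sum>p\<in>P. \<Sum>q\<in>P. gg q p) = (\<Sum>p\<in>P. \<Sum>q\<in>P. gg p q)"
      by (rule sum.swap)
    finally show ?thesis by simp
  qed
  define T where "T m n = (if m \<le> n then w * 4 ^ ?d * (hh m * hh n / s ^ ?d + hh n * RR m / RR n) else 0)" for m n
  have inner: "(\<Sum>y\<in>S m. \<Sum>z\<in>S n. gg (m, y) (n, z)) \<le> T m n" if mn: "m \<in> J" "n \<in> J" for m n
  proof (cases "m \<le> n")
    case False
    then show ?thesis unfolding gg_def T_def by simp
  next
    case True
    have "(\<Sum>y\<in>S m. \<Sum>z\<in>S n. gg (m, y) (n, z))
        = (\<Sum>y\<in>S m. w * r n ^ ?d * real (card {z\<in>S n. dist y z < r m + r n}))"
    proof (rule sum.cong[OF refl])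
      fix y assume "y \<in> S m"
      show "(\<Sum>z\<in>S n. gg (m, y) (n, z)) = w * r n ^ ?d * real (card {z\<in>S n. dist y z < r m + r n})"
        unfolding gg_def using True fin[OF mn(2)]
        by (auto simp: sum.If_cases intro!: arg_cong[where f=card])
    qed
    also have "\<dots> \<le> (\<Sum>y\<in>S m. w * r n ^ ?d * (4 ^ ?d * (r m ^ ?d / \<rho> n ^ ?d + 1)))"
    proof (rule sum_mono)
      fix y assume "y \<in> S m"
      have "real (card {z\<in>S n. dist y z < r m + r n}) \<le> 4 ^ ?d * (r m ^ ?d / \<rho> n ^ ?d + 1)"
        by (rule count_near) (use fin sep rho r0 rle mn in auto)
      moreover have "w * r n ^ ?d \<ge> 0" using w r0[OF mn(2)] by simp
      ultimately show "w * r n ^ ?d * real (card {z\<in>S n. dist y z < r m + r n})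
          \<le> w * r n ^ ?d * (4 ^ ?d * (r m ^ ?d / \<rho> n ^ ?d + 1))"
        by (rule mult_left_mono)
    qed
    also have "\<dots> = real (card (S m)) * (w * r n ^ ?d * (4 ^ ?d * (r m ^ ?d / \<rho> n ^ ?d + 1)))"
      by simp
    also have "\<dots> \<le> RR m * (w * r n ^ ?d * (4 ^ ?d * (r m ^ ?d / \<rho> n ^ ?d + 1)))"
    proof (rule mult_right_mono)
      show "real (card (S m)) \<le> RR m" by (rule cardle[OF mn(1)])
      show "0 \<le> w * r n ^ ?d * (4 ^ ?d * (r m ^ ?d / \<rho> n ^ ?d + 1))"
        using w r0 rho mn by (intro mult_nonneg_nonneg add_nonneg_nonneg divide_nonneg_nonneg zero_le_power) (auto intro: less_imp_le)
    qed
    also have "\<dots> = T m n"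
    proof -
      have e: "RR' * (w * (h2 / R2) * (F * ((h1 / RR') / (s' / R2) + 1))) = w * F * (h1 * h2 / s' + h2 * RR' / R2)"
        if "RR' > 0" "R2 > 0" "s' > 0" for RR' R2 s' h1 h2 F :: real
        using that by (simp add: field_simps)
      show ?thesis unfolding T_def rpow[OF mn(1)] rpow[OF mn(2)] rhopow[OF mn(2)]
        using True e RRpos mn sd by simp
    qed
    finally show ?thesis .
  qed
  have Q2: "(\<Sum>p\<in>P. \<Sum>q\<in>P. gg p q) \<le> (\<Sum>m\<in>J. \<Sum>n\<in>J. T m n)"
  proof -
    have "(\<Sum>p\<in>P. \<Sum>q\<in>P. gg p q) = (\<Sum>m\<in>J. \<Sum>y\<in>S m. \<Sum>n\<in>J. \<Sum>z\<in>S n. gg (m, y) (n, z))"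
    proof -
      have e1: "\<And>p. (\<Sum>q\<in>P. gg p q) = (\<Sum>n\<in>J. \<Sum>z\<in>S n. gg p (n, z))"
        unfolding P_def using J fin by (subst sum.Sigma) (auto simp: split_def)
      have "(\<Sum>p\<in>P. \<Sum>q\<in>P. gg p q) = (\<Sum>p\<in>P. \<Sum>n\<in>J. \<Sum>z\<in>S n. gg p (n, z))"
        by (simp add: e1)
      also have "\<dots> = (\<Sum>m\<in>J. \<Sum>y\<in>S m. \<Sum>n\<in>J. \<Sum>z\<in>S n. gg (m, y) (n, z))"
        unfolding P_def using J fin by (subst sum.Sigma) (auto simp: split_def)
      finally show ?thesis .
    qed
    also have "\<dots> = (\<Sum>m\<in>J. \<Sum>n\<in>J. \<Sum>y\<in>S m. \<Sum>z\<in>S n. gg (m, y) (n, z))"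
      by (intro sum.cong refl sum.swap)
    also have "\<dots> \<le> (\<Sum>m\<in>J. \<Sum>n\<in>J. T m n)"
      by (intro sum_mono inner)
    finally show ?thesis .
  qed
  have Q3: "(\<Sum>m\<in>J. \<Sum>n\<in>J. T m n) \<le> w * 4 ^ ?d * (H^2 / s ^ ?d + G * H)"
  proof -
    have split: "T m n = w * 4 ^ ?d * ((if m \<le> n then hh m * hh n else 0) / s ^ ?d
                   + (if m \<le> n then hh n * RR m / RR n else 0))" for m n
      unfolding T_def by simp
    have s1: "(\<Sum>m\<in>J. \<Sum>n\<in>J. (if m \<le> n then hh m * hh n else 0)) \<le> H^2"
    proof -
      have "(\<Sum>m\<in>J. \<Sum>n\<in>J. (if m \<le> n then hh m * hh n else 0)) \<le> (\<Sum>m\<in>J. \<Sum>n\<in>J. hh m * hh n)"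
        using hh0 by (intro sum_mono) auto
      also have "\<dots> = H^2" unfolding H_def power2_eq_square sum_product ..
      finally show ?thesis .
    qed
    have s2: "(\<Sum>m\<in>J. \<Sum>n\<in>J. (if m \<le> n then hh n * RR m / RR n else 0)) \<le> G * H"
    proof -
      have "(\<Sum>m\<in>J. \<Sum>n\<in>J. (if m \<le> n then hh n * RR m / RR n else 0))
          = (\<Sum>n\<in>J. \<Sum>m\<in>J. (if m \<le> n then hh n * RR m / RR n else 0))" by (rule sum.swap)
      also have "\<dots> = (\<Sum>n\<in>J. hh n * (\<Sum>m\<in>{m\<in>J. m \<le> n}. RR m / RR n))"
        using J by (simp add: sum_distrib_left sum.If_cases Int_def conj_commute)
      also have "\<dots> \<le> (\<Sum>n\<in>J. hh n * G)"
      proof (rule sum_mono)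
        fix n assume n: "n \<in> J"
        have "(\<Sum>m\<in>{m\<in>J. m \<le> n}. RR m / RR n) \<le> G"
          unfolding G_def by (rule geom_bound[OF J n a g up low[OF n]]) (use RRpos in \<open>auto intro: less_imp_le\<close>)
        then show "hh n * (\<Sum>m\<in>{m\<in>J. m \<le> n}. RR m / RR n) \<le> hh n * G"
          using hh0[OF n] by (rule mult_left_mono)
      qed
      also have "\<dots> = G * H" unfolding H_def by (simp add: sum_distrib_left mult.commute)
      finally show ?thesis .
    qed
    have "(\<Sum>m\<in>J. \<Sum>n\<in>J. T m n) = w * 4 ^ ?d * ((\<Sum>m\<in>J. \<Sum>n\<in>J. (if m \<le> n then hh m * hh n else 0)) / s ^ ?d
         + (\<Sum>m\<in>J. \<Sum>n\<in>J. (if m \<le> n then hh n * RR m / RR n else 0)))"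
      unfolding split by (simp only: distrib_left sum.distrib sum_divide_distrib sum_distrib_left)
    also have "\<dots> \<le> w * 4 ^ ?d * (H^2 / s ^ ?d + G * H)"
      using s1 s2 w sd by (intro mult_left_mono add_mono divide_right_mono) auto
    finally show ?thesis .
  qed
  have Hpos: "H > 0" using H2 unfolding H_def .
  have GH: "G * s ^ ?d \<le> H" using H1 unfolding G_def H_def .
  have Qle: "Q \<le> 4 * 4 ^ ?d * w * H^2 / s ^ ?d"
  proof -
    have "G * H \<le> H^2 / s ^ ?d"
      using GH Hpos sd by (simp add: field_simps power2_eq_square mult_right_mono)
    then have "w * 4 ^ ?d * (H^2 / s ^ ?d + G * H) \<le> w * 4 ^ ?d * (2 * (H^2 / s ^ ?d))"
      using w by (intro mult_left_mono) auto
    then show ?thesis using Q1 Q2 Q3 by (simp add: field_simps)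
  qed
  define L where "L = 4 * 4 ^ ?d * H / (c * s ^ ?d)"
  have L: "L > 0" unfolding L_def using Hpos c sd by simp
  have sm: "A \<le> Q / (2*L) + L/2 * measure lebesgue (\<Union>p\<in>P. B p)"
    unfolding A_def Q_def by (rule second_moment[OF P Bm L])
  have "Q / (2*L) \<le> c * w * H / 2"
  proof -
    have "Q / (2*L) \<le> (4 * 4 ^ ?d * w * H^2 / s ^ ?d) / (2*L)"
      using Qle L by (intro divide_right_mono) auto
    also have "\<dots> = c * w * H / 2"
      unfolding L_def using Hpos c sd s by (simp add: field_simps power2_eq_square)
    finally show ?thesis .
  qed
  then have "c * w * H / 2 \<le> L/2 * measure lebesgue (\<Union>p\<in>P. B p)" using sm A_ge by linarith
  then have "c * w * H \<le> L * measure lebesgue (\<Union>p\<in>P. B p)" by simp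
  then have "c * w * H / L \<le> measure lebesgue (\<Union>p\<in>P. B p)"
    using L by (simp add: divide_le_eq mult.commute)
  moreover have "c * w * H / L = c^2 * w * s ^ ?d / 4 ^ (?d+1)"
    unfolding L_def using Hpos c sd by (simp add: field_simps power2_eq_square)
  ultimately show ?thesis unfolding UE w_def by simp
qed

lemma powr_inv_pow:
  fixes x :: real
  assumes "x \<ge> 0" "d > 0"
  shows "(x powr (1 / real d)) ^ d = x"
proof (cases "x = 0")
  case True then show ?thesis using assms by simp
next
  case False
  then show ?thesis using assms by (simp add: powr_power)
qed

lemma powr_neg_inv_pow:
  fixes x :: real
  assumes "x > 0" "d > 0"
  shows "(x powr (- 1 / real d)) ^ d = 1 / x"
  using assms by (simp add: powr_power powr_neg_one)

lemma not_summable_tail: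
  fixes g :: "nat \<Rightarrow> real"
  assumes g0: "\<And>n. g n \<ge> 0" and ns: "\<not> summable g"
  shows "\<exists>N. K < (\<Sum>n\<in>{M..<N}. g n)"
proof (rule ccontr)
  assume "\<not> ?thesis"
  then have le: "(\<Sum>n\<in>{M..<N}. g n) \<le> K" for N by (simp add: not_less)
  have "(\<Sum>n<N. g n) \<le> (\<Sum>n<M. g n) + K" for N
  proof (cases "N \<le> M")
    case True
    then have "(\<Sum>n<N. g n) \<le> (\<Sum>n<M. g n)" using g0 by (intro sum_mono2) auto
    moreover have "K \<ge> 0" using le[of 0] by simp
    ultimately show ?thesis by simp
  next
    case False
    then have "(\<Sum>n<N. g n) = (\<Sum>n<M. g n) + (\<Sum>n\<in>{M..<N}. g n)"
      by (metis linorder_not_le order.strict_implies_order sum.atLeastLessThan_concat lessThan_atLeast0 le0)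
    then show ?thesis using le[of N] by simp
  qed
  then have "summable g" using g0 by (intro summableI_nonneg_bounded) auto
  then show False using ns by simp
qed

theorem mainTheorem12:
  fixes f :: "nat \<Rightarrow> nat \<Rightarrow> 'a::metric_space \<Rightarrow> 'b::euclidean_space"
    and R :: "nat \<Rightarrow> nat" and X :: "'b set" and \<omega> :: 'a
    and h :: "nat \<Rightarrow> real" and \<gamma> c s :: real
  assumes X: "compact X"
    and cont: "\<And>l n. l \<in> {1..R n} \<Longrightarrow> continuous_on UNIV (f l n)"
    and into: "\<And>l n \<omega>'. l \<in> {1..R n} \<Longrightarrow> f l n \<omega>' \<in> X"
    and h_nonneg: "\<And>n. h n \<ge> 0"
    and gamma: "\<gamma> > 1"
    and R_asymp: "(\<lambda>n. real (R n)) \<in> \<Theta>(\<lambda>n. \<gamma> ^ n)"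
    and c: "c > 0" and s: "s > 0"
    and div: "\<not> summable (\<lambda>n. if \<omega> \<in> Bset f R c s n then h n else 0)"
  shows "emeasure lebesgue
           {x. \<exists>\<^sub>\<infinity>n. x \<in> (\<Union>l\<in>{1..R n}. ball (f l n \<omega>) ((h n / real (R n)) powr (1 / real DIM('b))))} > 0"
proof -
  let ?d = "DIM('b)"
  have d0: "?d > 0" by simp
  have gn: "\<gamma>^n > 0" for n using gamma by simp
  obtain b where b: "b > 0" and evb: "eventually (\<lambda>n. norm (real (R n)) \<le> b * norm (\<gamma>^n)) at_top"
    using landau_o.bigE[OF bigthetaD1[OF R_asymp]] by blast
  obtain a where a: "a > 0" and eva: "eventually (\<lambda>n. norm (real (R n)) \<ge> a * norm (\<gamma>^n)) at_top"
    using landau_omega.bigE[OF bigthetaD2[OF R_asymp]] by blast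
  obtain N0 where N0: "\<And>n. n \<ge> N0 \<Longrightarrow> a * \<gamma>^n \<le> real (R n) \<and> real (R n) \<le> b * \<gamma>^n"
  proof -
    from eventually_conj[OF eva evb] obtain N where
      "\<And>n. n \<ge> N \<Longrightarrow> norm (real (R n)) \<ge> a * norm (\<gamma>^n) \<and> norm (real (R n)) \<le> b * norm (\<gamma>^n)"
      unfolding eventually_at_top_linorder by blast
    then show ?thesis using gamma by (intro that[of N]) auto
  qed
  have Rpos: "real (R n) > 0" if "n \<ge> N0" for n
    using N0[OF that] a gn[of n] by (smt (verit) mult_pos_pos)
  have R1: "real (R n) \<ge> 1" if "n \<ge> N0" for n
    using Rpos[OF that] by simp
  define eps where "eps = (s/2) ^ ?d"
  have eps: "eps > 0" unfolding eps_def using s by simp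
  define I where "I = {n. N0 \<le> n \<and> \<omega> \<in> Bset f R c s n}"
  define hh where "hh n = (if n \<in> I then min (h n) eps else 0)" for n
  define \<rho> where "\<rho> n = s * real (R n) powr (-1 / real ?d)" for n
  define r where "r n = (hh n / real (R n)) powr (1 / real ?d)" for n
  define Y where "Y n = Yset f R n \<omega>" for n
  define E where "E n = (\<Union>y\<in>Y n. ball y ((h n / real (R n)) powr (1 / real ?d)))" for n
  have hh0: "hh n \<ge> 0" for n unfolding hh_def using h_nonneg eps by simp
  have hhh: "hh n \<le> h n" for n unfolding hh_def using h_nonneg by simp
  have hheps: "hh n \<le> eps" for n unfolding hh_def using eps by simp
  have finY: "finite (Y n)" for n unfolding Y_def Yset_def by simp
  have cardY: "card (Y n) \<le> R n" for n unfolding Y_def Yset_def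
    using card_image_le[of "{1..R n}" "\<lambda>l. f l n \<omega>"] by simp
  have exS: "\<exists>T. T \<subseteq> Y n \<and> separated (\<rho> n) T \<and> c * real (R n) < real (card T)" if "n \<in> I" for n
  proof -
    let ?C = "{card T | T. T \<subseteq> Y n \<and> separated (\<rho> n) T}"
    have "?C \<subseteq> card ` Pow (Y n)" by auto
    then have finC: "finite ?C" using finY[of n] by (meson finite_Pow_iff finite_imageI finite_subset)
    have "0 \<in> ?C" by (auto simp: separated_def intro!: exI[of _ "{}"])
    then have "Max ?C \<in> ?C" using finC by (intro Max_in) auto
    then obtain T where T: "T \<subseteq> Y n" "separated (\<rho> n) T" "card T = Tsep (Y n) (\<rho> n)"
      unfolding Tsep_def by auto
    from that have "c < real (Tsep (Y n) (\<rho> n)) / real (R n)"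
      unfolding I_def Bset_def Y_def \<rho>_def by simp
    moreover have "real (R n) > 0" using Rpos that unfolding I_def by simp
    ultimately have "c * real (R n) < real (card T)" using T(3) by (simp add: pos_less_divide_eq)
    then show ?thesis using T by blast
  qed
  define S where "S n = (if n \<in> I then (SOME T. T \<subseteq> Y n \<and> separated (\<rho> n) T \<and> c * real (R n) < real (card T)) else {})" for n
  have S: "S n \<subseteq> Y n \<and> separated (\<rho> n) (S n) \<and> (n \<in> I \<longrightarrow> c * real (R n) < real (card (S n)))" for n
  proof (cases "n \<in> I")
    case True then show ?thesis unfolding S_def using someI_ex[OF exS[OF True]] by simp
  next
    case False then show ?thesis unfolding S_def by (simp add: separated_def)
  qed
  have finS: "finite (S n)" for n using S finY by (meson finite_subset)
  have SX: "S n \<subseteq> X" for n using S[of n] into unfolding Y_def Yset_def by auto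
  have rho_pos: "\<rho> n > 0" if "n \<ge> N0" for n unfolding \<rho>_def using s Rpos[OF that] by simp
  have rhopow: "\<rho> n ^ ?d = s ^ ?d / real (R n)" if "n \<ge> N0" for n
    unfolding \<rho>_def power_mult_distrib using powr_neg_inv_pow[OF Rpos[OF that] d0] by simp
  have r0: "r n \<ge> 0" for n unfolding r_def by simp
  have rpow: "r n ^ ?d = hh n / real (R n)" for n
    unfolding r_def using hh0[of n] by (intro powr_inv_pow d0) simp
  have rle: "r n \<le> \<rho> n / 2" if "n \<ge> N0" for n
  proof -
    have "r n ^ ?d \<le> (\<rho> n / 2) ^ ?d"
    proof -
      have "r n ^ ?d \<le> eps / real (R n)" unfolding rpow
        using hheps[of n] Rpos[OF that] by (intro divide_right_mono) auto
      also have "\<dots> = (\<rho> n / 2) ^ ?d" unfolding power_divide rhopow[OF that] eps_def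
        by (simp add: power_divide)
      finally show ?thesis .
    qed
    then show ?thesis using power_mono_iff[of "r n" "\<rho> n / 2" ?d] r0 rho_pos[OF that] d0 by simp
  qed
  have rho_le: "\<rho> n \<le> s" if "n \<ge> N0" for n
  proof -
    have "real (R n) powr (-1 / real ?d) \<le> real (R n) powr 0"
      using R1[OF that] by (intro powr_mono) auto
    then show ?thesis unfolding \<rho>_def using s Rpos[OF that] by simp
  qed
  have cardle: "real (card (S n)) \<le> real (R n)" for n
    using card_mono[OF finY S[THEN conjunct1]] cardY[of n] by (metis of_nat_le_iff order_trans)
  have cardge: "c * hh n \<le> real (card (S n)) * hh n / real (R n)" if "n \<ge> N0" for n
  proof (cases "n \<in> I")
    case True
    have "c * real (R n) * hh n \<le> real (card (S n)) * hh n"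
      using S[of n] True hh0[of n] by (intro mult_right_mono) auto
    then show ?thesis using Rpos[OF that] by (simp add: le_divide_eq mult.commute mult.left_commute)
  next
    case False then show ?thesis unfolding hh_def by simp
  qed
  have ns: "\<not> summable hh"
  proof
    assume sh: "summable hh"
    then have "hh \<longlonglongrightarrow> 0" by (rule summable_LIMSEQ_zero)
    then have "eventually (\<lambda>n. hh n < eps) sequentially"
      using eps by (auto dest: order_tendstoD(2))
    then have ev: "eventually (\<lambda>n. hh n = (if \<omega> \<in> Bset f R c s n then h n else 0)) sequentially"
    proof (rule eventually_mono[OF eventually_conj[OF _ eventually_ge_at_top[of N0]]])
      fix n assume n: "hh n < eps \<and> N0 \<le> n"
      show "hh n = (if \<omega> \<in> Bset f R c s n then h n else 0)"
        using n unfolding hh_def I_def by (auto simp: min_def split: if_splits)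
    qed
    have "summable (\<lambda>n. if \<omega> \<in> Bset f R c s n then h n else 0)"
      using summable_cong[OF ev] sh by simp
    then show False using div by simp
  qed
  obtain K0 where K0: "\<And>x. x \<in> X \<Longrightarrow> norm x \<le> K0"
    using compact_imp_bounded[OF X] unfolding bounded_iff by blast
  define F where "F M = (\<Union>n\<in>{M..}. \<Union>y\<in>S n. ball y (r n))" for M
  define \<delta> where "\<delta> = c^2 * unit_ball_vol (real ?d) * s ^ ?d / 4 ^ (?d+1)"
  have \<delta>: "\<delta> > 0" unfolding \<delta>_def using c s by simp
  have Fopen: "open (F M)" for M unfolding F_def by auto
  have Fbdd: "F M \<subseteq> cball 0 (K0 + s)" if "M \<ge> N0" for M
  proof
    fix x assume "x \<in> F M"
    then obtain n y where n: "n \<ge> M" and y: "y \<in> S n" and xy: "dist y x < r n" unfolding F_def by auto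
    have "r n \<le> s" using rle[of n] rho_le[of n] rho_pos[of n] n that by fastforce
    moreover have "norm y \<le> K0" using K0 SX y by blast
    moreover have "norm x \<le> norm y + dist y x" by (metis dist_norm norm_triangle_sub dist_commute)
    ultimately show "x \<in> cball 0 (K0 + s)" using xy by (simp add: dist_norm)
  qed
  have Fm: "F M \<in> lmeasurable" if "M \<ge> N0" for M
    using Fopen Fbdd[OF that] by (intro lmeasurable_open) (auto intro: bounded_subset)
  have FM: "ennreal \<delta> \<le> emeasure lebesgue (F M)" if M: "M \<ge> N0" for M
  proof -
    define G where "G = (b/a) * (\<gamma>/(\<gamma>-1)) * s ^ ?d"
    obtain N where N: "G < (\<Sum>n\<in>{M..<N}. hh n)" using not_summable_tail[OF hh0 ns] by blast
    have G0: "G \<ge> 0" unfolding G_def using a b gamma s by simp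
    have "\<delta> \<le> measure lebesgue (\<Union>n\<in>{M..<N}. \<Union>y\<in>S n. ball y (r n))"
      unfolding \<delta>_def
    proof (rule core[where RR="\<lambda>n. real (R n)" and \<rho>=\<rho> and a=a and b=b and \<gamma>=\<gamma>])
      show "(b/a) * (\<gamma>/(\<gamma>-1)) * s ^ ?d \<le> (\<Sum>n\<in>{M..<N}. hh n)" using N unfolding G_def by simp
      show "0 < (\<Sum>n\<in>{M..<N}. hh n)" using N G0 by simp
    qed (use M finS S rho_pos r0 rle rpow rhopow Rpos cardle cardge hh0 N0 a gamma s c in auto)
    also have "\<dots> \<le> measure lebesgue (F M)"
    proof (rule measure_mono_fmeasurable)
      have "open (\<Union>n\<in>{M..<N}. \<Union>y\<in>S n. ball y (r n))" by auto
      then show "(\<Union>n\<in>{M..<N}. \<Union>y\<in>S n. ball y (r n)) \<in> sets lebesgue" by (simp add: borel_open)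
    qed (use Fm M in \<open>auto simp: F_def\<close>)
    finally have "\<delta> \<le> measure lebesgue (F M)" .
    then show ?thesis using emeasure_eq_measure2[OF Fm[OF M]] by simp
  qed
  define Lm where "Lm = (\<Inter>M\<in>{N0..}. F M)"
  have "emeasure lebesgue Lm = (INF M\<in>{N0..}. emeasure lebesgue (F M))"
    unfolding Lm_def
  proof (rule emeasure_INT_decseq_subset)
    show "{N0..} \<noteq> {}" by auto
    show "\<And>i j. i \<in> {N0..} \<Longrightarrow> j \<in> {N0..} \<Longrightarrow> i \<le> j \<Longrightarrow> F j \<subseteq> F i" unfolding F_def by force
    show "\<And>i. i \<in> {N0..} \<Longrightarrow> F i \<in> sets lebesgue" using Fm by (auto simp: fmeasurable_def)
    show "\<And>i. i \<in> {N0..} \<Longrightarrow> emeasure lebesgue (F i) \<noteq> \<infinity>"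
    proof -
      fix i assume "i \<in> {N0..}"
      then have "emeasure lebesgue (F i) = ennreal (measure lebesgue (F i))"
        using emeasure_eq_measure2[OF Fm[of i]] by simp
      then show "emeasure lebesgue (F i) \<noteq> \<infinity>" by simp
    qed
  qed
  also have "\<dots> \<ge> ennreal \<delta>" using FM by (auto intro: INF_greatest)
  finally have Lge: "ennreal \<delta> \<le> emeasure lebesgue Lm" .
  define E' where "E' n = (\<Union>l\<in>{1..R n}. ball (f l n \<omega>) ((h n / real (R n)) powr (1 / real ?d)))" for n
  define Tg where "Tg = {x. \<exists>\<^sub>\<infinity>n. x \<in> E' n}"
  have Tg_eq: "Tg = (\<Inter>m. \<Union>n\<in>{m..}. E' n)" unfolding Tg_def INFM_nat_le by auto
  have Tgm: "Tg \<in> sets lebesgue"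
    unfolding Tg_eq
  proof (rule sets.countable_INT)
    show "range (\<lambda>m. \<Union>n\<in>{m..}. E' n) \<subseteq> sets lebesgue"
    proof (clarify)
      fix m
      have "open (\<Union>n\<in>{m..}. E' n)" unfolding E'_def by auto
      then show "(\<Union>n\<in>{m..}. E' n) \<in> sets lebesgue" by (simp add: borel_open)
    qed
  qed simp
  have sub: "Lm \<subseteq> Tg"
  proof
    fix x assume x: "x \<in> Lm"
    have "\<exists>n\<ge>m. x \<in> E' n" for m
    proof -
      from x have "x \<in> F (max m N0)" unfolding Lm_def by auto
      then obtain n y where n: "n \<ge> max m N0" and y: "y \<in> S n" and xy: "x \<in> ball y (r n)" unfolding F_def by auto
      obtain l where l: "l \<in> {1..R n}" "y = f l n \<omega>" using S[of n] y unfolding Y_def Yset_def by auto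
      have "r n \<le> (h n / real (R n)) powr (1 / real ?d)"
        unfolding r_def using hhh[of n] hh0[of n] by (intro powr_mono2 divide_right_mono) auto
      then have "x \<in> E' n" unfolding E'_def using l xy
        by (intro UN_I[of l]) (auto simp: dist_commute)
      then show ?thesis using n by auto
    qed
    then show "x \<in> Tg" unfolding Tg_def INFM_nat_le by auto
  qed
  have "ennreal \<delta> \<le> emeasure lebesgue Tg"
    using Lge emeasure_mono[OF sub Tgm] by (rule order_trans)
  then have "0 < emeasure lebesgue Tg" using \<delta> by (metis ennreal_eq_0_iff leD not_gr_zero order.strict_iff_not less_le_trans ennreal_less_zero_iff)
  then show ?thesis unfolding Tg_def E'_def .
qed

end
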